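(* Let $\mathbf{x}_1,\dots,\mathbf{x}_N\in\mathbb{R}^d$ be strictly linearly separable, let $\hat{\mathbf{w}}=\operatorname{argmin}\|\mathbf{w}\|^2$ subject to $\mathbf{w}^\top\mathbf{x}_n\ge1$ for all $n$, let $\mathcal{S}=\{n:\hat{\mathbf{w}}^\top\mathbf{x}_n=1\}$, and let $\alpha_n\ge0$ ($n\in\mathcal{S}$) be SVM dual variables, so that $\hat{\mathbf{w}}=\sum_{n\in\mathcal{S}}\alpha_n\mathbf{x}_n$. Let $B$ be a positive integer with $K=N/B$ an integer and let $(\mathcal{B}(u))_{u\ge0}$ be minibatches of $B$ distinct indices chosen either by random sampling with replacement or by sampling without replacement. Then (almost surely in the first case, surely in the second) there exist a finite vector $\check{\mathbf{w}}\in\mathbb{R}^d$, not depending on $t$ (but possibly depending on the whole sequence of minibatch selections, including future ones), and vectors $\mathbf{m}_1(t)$ such that for all $t$ $$K\sum_{u=1}^{t-1}\frac1u\sum_{n\in\mathcal{S}\cap\mathcal{B}(u)}\alpha_n\mathbf{x}_n=\log\left(\frac tK\right)\hat{\mathbf{w}}+\check{\mathbf{w}}+\mathbf{m}_1(t),$$ where for every $\epsilon>0$, $\|\mathbf{m}_1(t)\|=o(t^{-0.5+\epsilon})$, and $\|\mathbf{m}_1(t+1)-\mathbf{m}_1(t)\|=O(t^{-1})$.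
   Context: Sampling regimes: (random sampling with replacement) at each iteration a minibatch of $B$ distinct indices is sampled randomly and uniformly, independently across iterations, so that each sample has identical probability $1/K$ of being selected; (sampling without replacement) for every $u\ge0$, $\bigcup_{k=0}^{K-1}\mathcal{B}(Ku+k)=\{1,\dots,N\}$. *)

theory Defs
  imports "HOL-Probability.Probability" "HOL-Library.Landau_Symbols"
begin

definition strictly_linearly_separable :: "nat \<Rightarrow> (nat \<Rightarrow> real^'d) \<Rightarrow> bool" where
  "strictly_linearly_separable N x \<longleftrightarrow> (\<exists>w. \<forall>n\<in>{1..N}. inner w (x n) > 0)"

definition is_max_margin :: "nat \<Rightarrow> (nat \<Rightarrow> real^'d) \<Rightarrow> real^'d \<Rightarrow> bool" where
  "is_max_margin N x wh \<longleftrightarrow> (\<forall>n\<in>{1..N}. inner wh (x n) \<ge> 1) \<and>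
     (\<forall>w. (\<forall>n\<in>{1..N}. inner w (x n) \<ge> 1) \<longrightarrow> (norm wh)\<^sup>2 \<le> (norm w)\<^sup>2)"

definition support_set :: "nat \<Rightarrow> (nat \<Rightarrow> real^'d) \<Rightarrow> real^'d \<Rightarrow> nat set" where
  "support_set N x wh = {n\<in>{1..N}. inner wh (x n) = 1}"

definition minibatches :: "nat \<Rightarrow> nat \<Rightarrow> nat set set" where
  "minibatches N B = {A. A \<subseteq> {1..N} \<and> card A = B}"

definition without_replacement :: "nat \<Rightarrow> nat \<Rightarrow> (nat \<Rightarrow> nat set) \<Rightarrow> bool" where
  "without_replacement N B bs \<longleftrightarrow> (\<forall>u. bs u \<in> minibatches N B) \<and>
     (\<forall>u. (\<Union>k<N div B. bs ((N div B) * u + k)) = {1..N})"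

definition random_sampling :: "'w measure \<Rightarrow> nat \<Rightarrow> nat \<Rightarrow> (nat \<Rightarrow> 'w \<Rightarrow> nat set) \<Rightarrow> bool" where
  "random_sampling M N B batch \<longleftrightarrow> prob_space M \<and>
     (\<forall>u. batch u \<in> measurable M (count_space UNIV)) \<and>
     prob_space.indep_vars M (\<lambda>_. count_space UNIV) batch UNIV \<and>
     (\<forall>u. distr M (count_space UNIV) (batch u) = measure_pmf (pmf_of_set (minibatches N B)))"

definition lemma5_concl ::
  "nat \<Rightarrow> (nat \<Rightarrow> real^'d) \<Rightarrow> real^'d \<Rightarrow> nat set \<Rightarrow> (nat \<Rightarrow> real) \<Rightarrow> (nat \<Rightarrow> nat set) \<Rightarrow> bool" where
  "lemma5_concl K x wh S \<alpha> bs \<longleftrightarrow>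
    (\<exists>wc::real^'d. \<exists>m1::nat \<Rightarrow> real^'d.
       (\<forall>t\<ge>1. real K *\<^sub>R (\<Sum>u=1..<t. (1 / real u) *\<^sub>R (\<Sum>n\<in>S \<inter> bs u. \<alpha> n *\<^sub>R x n))
              = ln (real t / real K) *\<^sub>R wh + wc + m1 t) \<and>
       (\<forall>\<epsilon>>0. (\<lambda>t. norm (m1 t)) \<in> o(\<lambda>t. real t powr (\<epsilon> - 1/2))) \<and>
       (\<lambda>t. norm (m1 (t + 1) - m1 t)) \<in> O(\<lambda>t. 1 / real t))"

end

theory Submission
  imports Defs
begin


lemma powr_tele:
  fixes x b :: real
  assumes x: "x \<ge> 1" and b: "0 < b" "b \<le> 1"
  shows "x powr (-b-1) \<le> (4/b) * (x powr (-b) - (x+1) powr (-b))"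
proof -
  have der: "\<forall>y. x \<le> y \<and> y \<le> x+1 \<longrightarrow> ((\<lambda>y. y powr (-b)) has_real_derivative (-b) * y powr (-b-1)) (at y)"
    using x by (auto intro!: derivative_eq_intros simp: powr_diff field_simps)
  obtain z where z: "x < z" "z < x+1" "(x+1) powr (-b) - x powr (-b) = ((x+1) - x) * ((-b) * z powr (-b-1))"
    using MVT2[of x "x+1" "\<lambda>y. y powr (-b)" "\<lambda>y. (-b) * y powr (-b-1)"] der by auto
  have "(x+1) powr (-b-1) \<le> z powr (-b-1)"
    using z x b by (intro powr_mono2') auto
  have p2: "(2*x) powr (-b-1) \<le> (x+1) powr (-b-1)"
    using x b by (intro powr_mono2') auto
  have p3: "(2*x) powr (-b-1) = 2 powr (-b-1) * x powr (-b-1)"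
    using x by (simp add: powr_mult)
  have p4: "2 powr (-b-1) \<ge> (2::real) powr (-2)"
    using b by (intro powr_mono) auto
  have p5: "(2::real) powr (-2) = 1/4"
    by (simp add: powr_minus powr_numeral)
  have "x powr (-b-1) = 4 * ((1/4) * x powr (-b-1))" by simp
  also have "\<dots> \<le> 4 * (2 powr (-b-1) * x powr (-b-1))"
    using p4 p5 by (intro mult_left_mono mult_right_mono) auto
  also have "\<dots> \<le> 4 * z powr (-b-1)"
    using p2 p3 \<open>(x+1) powr (-b-1) \<le> z powr (-b-1)\<close> by simp
  finally have "x powr (-b-1) \<le> 4 * z powr (-b-1)" .
  hence "b * x powr (-b-1) \<le> b * (4 * z powr (-b-1))" using b by (intro mult_left_mono) auto
  moreover have "x powr (-b) - (x+1) powr (-b) = b * z powr (-b-1)" using z by simp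
  ultimately show ?thesis using b by (simp add: field_simps)
qed

lemma powr_tail:
  fixes b :: real and m :: nat
  assumes b: "0 < b" "b \<le> 1" and m: "m \<ge> 1"
  shows "summable (\<lambda>k. real (m+k) powr (-b-1))"
    and "(\<Sum>k. real (m+k) powr (-b-1)) \<le> (4/b) * real m powr (-b)"
proof -
  define g where "g k = real (m+k) powr (-b)" for k
  have "g \<longlonglongrightarrow> 0"
  proof -
    have "(\<lambda>k. real k powr (-b)) \<longlonglongrightarrow> 0"
      using b by (intro tendsto_neg_powr filterlim_real_sequentially) auto
    hence "(\<lambda>k. real (k+m) powr (-b)) \<longlonglongrightarrow> 0"
      by (rule LIMSEQ_ignore_initial_segment)
    thus ?thesis unfolding g_def by (simp add: add.commute)
  qed
  hence tel: "(\<lambda>k. (4/b) * (g k - g (Suc k))) sums ((4/b) * (g 0 - 0))"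
    by (intro sums_mult telescope_sums')
  have le: "real (m+k) powr (-b-1) \<le> (4/b) * (g k - g (Suc k))" for k
    using powr_tele[of "real (m+k)" b] b m unfolding g_def by (simp add: add.commute add.left_commute)
  show sm: "summable (\<lambda>k. real (m+k) powr (-b-1))"
    by (rule summable_comparison_test[OF _ sums_summable[OF tel]]) (use le in auto)
  have "(\<Sum>k. real (m+k) powr (-b-1)) \<le> (\<Sum>k. (4/b) * (g k - g (Suc k)))"
    by (intro suminf_le le sm sums_summable[OF tel])
  also have "\<dots> = (4/b) * real m powr (-b)"
    using tel by (simp add: sums_iff g_def)
  finally show "(\<Sum>k. real (m+k) powr (-b-1)) \<le> (4/b) * real m powr (-b)" .
qed


lemma core:
  fixes d :: "nat \<Rightarrow> 'a::banach"
  assumes bnd: "\<And>a. a > 1/2 \<Longrightarrow> \<exists>C T0. \<forall>T\<ge>T0. norm (\<Sum>u\<in>{1..T}. d u) \<le> C * real T powr a"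
  shows "\<exists>L. \<forall>a. 1/2 < a \<longrightarrow> a < 1 \<longrightarrow> (\<exists>C T1. \<forall>T\<ge>T1.
            norm ((\<Sum>u\<in>{1..<Suc T}. (1/real u) *\<^sub>R d u) - L) \<le> C * real T powr (a-1))"
proof -
  define S where "S T = (\<Sum>u\<in>{1..T}. d u)" for T
  define f where "f u = (1/(real u * (real u + 1))) *\<^sub>R S u" for u
  have S0: "S 0 = 0" by (simp add: S_def)
  have SSuc: "S (Suc T) = S T + d (Suc T)" for T by (simp add: S_def)
  have ident: "(\<Sum>u\<in>{1..<Suc T}. (1/real u) *\<^sub>R d u) = (1/real T) *\<^sub>R S T + (\<Sum>u<T. f u)" for T
  proof (induction T)
    case 0
    then show ?case by (simp add: S0)
  next
    case (Suc T)
    have "(\<Sum>u\<in>{1..<Suc (Suc T)}. (1/real u) *\<^sub>R d u) = (\<Sum>u\<in>{1..<Suc T}. (1/real u) *\<^sub>R d u) + (1/real (Suc T)) *\<^sub>R d (Suc T)"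
      by simp
    also have "\<dots> = (1/real T) *\<^sub>R S T + (\<Sum>u<T. f u) + (1/real (Suc T)) *\<^sub>R d (Suc T)"
      using Suc by simp
    also have "(1/real T) *\<^sub>R S T = (1/real (Suc T)) *\<^sub>R S T + f T"
    proof (cases "T = 0")
      case True then show ?thesis by (simp add: S0 f_def)
    next
      case False
      have "(1/real T) = (1/real (Suc T)) + (1/(real T * (real T + 1)))"
      proof -
        have a: "real T > 0" using False by simp
        have c: "1/real (Suc T) = real T / (real T * (real T + 1))" using a by (simp add: add.commute)
        have "(1/real (Suc T)) + (1/(real T * (real T + 1))) = (real T + 1) / (real T * (real T + 1))"
          unfolding c by (simp add: add_divide_distrib)
        also have "\<dots> = 1 / real T" using a by simp
        finally show ?thesis by simp
      qed
      then show ?thesis by (simp add: f_def scaleR_add_left)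
    qed
    finally show ?case by (simp add: SSuc scaleR_add_right algebra_simps)
  qed
  have fbound: "\<exists>C T0. T0 \<ge> 1 \<and> C \<ge> 0 \<and> (\<forall>T\<ge>T0. norm (S T) \<le> C * real T powr a) \<and>
      (\<forall>u\<ge>T0. norm (f u) \<le> C * real u powr (-(1-a)-1))" if ah: "a > 1/2" for a
  proof -
    obtain C T0 where CT: "\<forall>T\<ge>T0. norm (S T) \<le> C * real T powr a"
      using bnd[OF ah] unfolding S_def by blast
    have C: "norm (S T) \<le> \<bar>C\<bar> * real T powr a" if "T \<ge> T0" for T
      using CT that by (smt (verit) mult_right_mono powr_ge_zero)
    have "norm (f u) \<le> \<bar>C\<bar> * real u powr (-(1-a)-1)" if "u \<ge> max T0 1" for u
    proof -
      have u: "real u \<ge> 1" using that by auto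
      have "norm (f u) = norm (S u) / (real u * (real u + 1))"
        using u by (simp add: f_def)
      also have "\<dots> \<le> (\<bar>C\<bar> * real u powr a) / (real u * real u)"
        using C[of u] that u by (intro frac_le mult_mono) auto
      also have "real u * real u = real u powr 2"
        using u by (simp add: powr_numeral power2_eq_square)
      also have "(\<bar>C\<bar> * real u powr a) / real u powr 2 = \<bar>C\<bar> * real u powr (a - 2)"
        by (simp only: powr_diff times_divide_eq_right)
      finally show ?thesis by (simp add: algebra_simps)
    qed
    thus ?thesis using C
      by (intro exI[of _ "\<bar>C\<bar>"] exI[of _ "max T0 1"]) auto
  qed
  have sumf: "summable (\<lambda>u. norm (f u))"
  proof -
    obtain C T0 where CT: "\<forall>u\<ge>T0. norm (f u) \<le> C * real u powr (-(1-3/4)-1)"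
      using fbound[of "3/4"] by auto
    have "summable (\<lambda>u. C * real u powr (-(1-3/4)-1))"
      by (intro summable_mult) (simp add: summable_real_powr_iff)
    thus ?thesis
      by (rule summable_comparison_test_ev[rotated]) (use CT in \<open>auto simp: eventually_at_top_linorder\<close>)
  qed
  hence sf: "summable f" by (rule summable_norm_cancel)
  define L where "L = suminf f"
  show ?thesis
  proof (intro exI[of _ L] allI impI)
    fix a :: real assume a: "1/2 < a" "a < 1"
    obtain C T0 where CT: "T0 \<ge> 1" "C \<ge> 0" "\<forall>T\<ge>T0. norm (S T) \<le> C * real T powr a"
      "\<forall>u\<ge>T0. norm (f u) \<le> C * real u powr (-(1-a)-1)"
      using fbound[of a] a by auto
    define b where "b = 1 - a"
    have b: "0 < b" "b \<le> 1" using a by (auto simp: b_def)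
    show "\<exists>C T1. \<forall>T\<ge>T1. norm ((\<Sum>u\<in>{1..<Suc T}. (1/real u) *\<^sub>R d u) - L) \<le> C * real T powr (a-1)"
    proof (intro exI[of _ "C + C * (4/b)"] exI[of _ T0] allI impI)
      fix T assume T: "T \<ge> T0"
      have T1: "real T \<ge> 1" using T CT by auto
      have "L = (\<Sum>k. f (k+T)) + (\<Sum>u<T. f u)"
        unfolding L_def by (rule suminf_split_initial_segment[OF sf])
      hence "(\<Sum>u\<in>{1..<Suc T}. (1/real u) *\<^sub>R d u) - L = (1/real T) *\<^sub>R S T - (\<Sum>k. f (k+T))"
        unfolding ident[of T] by (simp add: algebra_simps)
      hence "norm ((\<Sum>u\<in>{1..<Suc T}. (1/real u) *\<^sub>R d u) - L) \<le> norm ((1/real T) *\<^sub>R S T) + norm (\<Sum>k. f (k+T))"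
        by (simp only:) (rule norm_triangle_ineq4)
      also have "norm ((1/real T) *\<^sub>R S T) \<le> C * real T powr (a-1)"
      proof -
        have "norm ((1/real T) *\<^sub>R S T) = norm (S T) / real T" using T1 by simp
        also have "\<dots> \<le> C * real T powr a / real T"
          using CT(3) T T1 by (intro divide_right_mono) auto
        also have "\<dots> = C * real T powr (a-1)"
          using T1 by (simp add: powr_diff)
        finally show ?thesis .
      qed
      also have "norm (\<Sum>k. f (k+T)) \<le> C * (4/b) * real T powr (a-1)"
      proof -
        have s1: "summable (\<lambda>k. norm (f (k+T)))"
          using sumf by (rule summable_ignore_initial_segment)
        have s2: "summable (\<lambda>k. C * real (T+k) powr (-b-1))"
          using powr_tail(1)[OF b, of T] T1 by (intro summable_mult) auto
        have "norm (\<Sum>k. f (k+T)) \<le> (\<Sum>k. norm (f (k+T)))"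
          by (rule summable_norm[OF s1])
        also have "\<dots> \<le> (\<Sum>k. C * real (T+k) powr (-b-1))"
        proof (intro suminf_le s1 s2)
          fix k
          have "norm (f (k+T)) \<le> C * real (k+T) powr (-(1-a)-1)"
            using CT(4) \<open>T \<ge> T0\<close> le_add2 order_trans by blast
          thus "norm (f (k+T)) \<le> C * real (T+k) powr (-b-1)" by (simp only: b_def add.commute)
        qed
        also have "\<dots> = C * (\<Sum>k. real (T+k) powr (-b-1))"
          using powr_tail(1)[OF b, of T] T1 by (intro suminf_mult) auto
        also have "\<dots> \<le> C * ((4/b) * real T powr (-b))"
          using powr_tail(2)[OF b, of T] T1 CT(2) by (intro mult_left_mono) auto
        finally show ?thesis by (simp add: b_def)
      qed
      finally show "norm ((\<Sum>u\<in>{1..<Suc T}. (1/real u) *\<^sub>R d u) - L) \<le> (C + C * (4/b)) * real T powr (a-1)"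
        by (simp add: algebra_simps)
    qed
  qed
qed


lemma harm_err:
  assumes "T \<ge> 1"
  shows "\<bar>harm T - ln (real (Suc T)) - euler_mascheroni\<bar> \<le> 1 / real T"
proof -
  have "euler_mascheroni \<in> {harm T - ln (real (Suc T)) + inverse (real (2*(T+1))) .. harm T - ln (real (Suc T)) + inverse (real (2*T))}"
    using euler_mascheroni_bounds[OF assms] by simp
  hence "harm T - ln (real (Suc T)) + inverse (real (2*(T+1))) \<le> euler_mascheroni"
    "euler_mascheroni \<le> harm T - ln (real (Suc T)) + inverse (real (2*T))" by auto
  moreover have "inverse (real (2*(T+1))) \<ge> 0" by (simp del: of_nat_mult)
  moreover have "inverse (real (2*T)) \<le> 1 / real T"
    using assms by (simp add: field_simps)
  ultimately show ?thesis by linarith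
qed

lemma powr_shift_le:
  fixes t :: nat and p :: real
  assumes "t \<ge> 2" "p \<le> 0" "p \<ge> -1"
  shows "real (t-1) powr p \<le> 2 * real t powr p"
proof -
  have t1: "real (t-1) \<ge> real t / 2" using assms by auto
  have "real (t-1) powr p \<le> (real t / 2) powr p"
    using assms t1 by (intro powr_mono2') auto
  also have "\<dots> = real t powr p / 2 powr p" by (simp add: powr_divide)
  also have "\<dots> = 2 powr (-p) * real t powr p" by (simp add: powr_minus divide_inverse)
  also have "2 powr (-p) \<le> 2 powr 1" using assms by (intro powr_mono) auto
  hence "2 powr (-p) * real t powr p \<le> 2 * real t powr p" by (intro mult_right_mono) auto
  finally show ?thesis .
qed

lemma conclA:
  fixes x :: "nat \<Rightarrow> real^'d" and wh :: "real^'d" and K :: nat and bs :: "nat \<Rightarrow> nat set"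
  assumes K: "K > 0"
    and dbound: "\<And>u. norm ((\<Sum>n\<in>S \<inter> bs u. \<alpha> n *\<^sub>R x n) - (1/real K) *\<^sub>R wh) \<le> M"
    and growth: "\<And>a. a > 1/2 \<Longrightarrow> \<exists>C T0. \<forall>T\<ge>T0.
        norm (\<Sum>u\<in>{1..T}. (\<Sum>n\<in>S \<inter> bs u. \<alpha> n *\<^sub>R x n) - (1/real K) *\<^sub>R wh) \<le> C * real T powr a"
  shows "lemma5_concl K x wh S \<alpha> bs"
proof -
  define v where "v u = (\<Sum>n\<in>S \<inter> bs u. \<alpha> n *\<^sub>R x n)" for u
  define d where "d u = v u - (1/real K) *\<^sub>R wh" for u
  define D where "D t = (\<Sum>u\<in>{1..<t}. (1/real u) *\<^sub>R d u)" for t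
  obtain L where L: "\<And>a. 1/2 < a \<Longrightarrow> a < 1 \<Longrightarrow> \<exists>C T1. \<forall>T\<ge>T1. norm (D (Suc T) - L) \<le> C * real T powr (a-1)"
    using core[of d] growth unfolding d_def v_def D_def by blast
  define \<gamma> :: real where "\<gamma> = euler_mascheroni"
  define wc where "wc = (\<gamma> + ln (real K)) *\<^sub>R wh + real K *\<^sub>R L"
  define m1 where "m1 t = (harm (t-1) - ln (real t) - \<gamma>) *\<^sub>R wh + real K *\<^sub>R (D t - L)" for t
  have Kr: "real K > 0" using K by simp
  have eq: "real K *\<^sub>R (\<Sum>u=1..<t. (1 / real u) *\<^sub>R (\<Sum>n\<in>S \<inter> bs u. \<alpha> n *\<^sub>R x n))
              = ln (real t / real K) *\<^sub>R wh + wc + m1 t" if t: "t \<ge> 1" for t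
  proof -
    have h: "(\<Sum>u=1..<t. 1 / real u) = harm (t-1)"
    proof -
      have "{1..<t} = {1..t-1}" using t by auto
      thus ?thesis by (simp add: harm_def inverse_eq_divide)
    qed
    have "(\<Sum>u=1..<t. (1 / real u) *\<^sub>R (\<Sum>n\<in>S \<inter> bs u. \<alpha> n *\<^sub>R x n))
        = (\<Sum>u=1..<t. (1 / real u) *\<^sub>R d u + (1 / real u) *\<^sub>R ((1/real K) *\<^sub>R wh))"
      by (intro sum.cong) (auto simp: d_def v_def scaleR_diff_right)
    also have "\<dots> = D t + harm (t-1) *\<^sub>R ((1/real K) *\<^sub>R wh)"
      by (simp only: sum.distrib D_def scaleR_sum_left[symmetric] h)
    finally have "real K *\<^sub>R (\<Sum>u=1..<t. (1 / real u) *\<^sub>R (\<Sum>n\<in>S \<inter> bs u. \<alpha> n *\<^sub>R x n))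
        = real K *\<^sub>R D t + harm (t-1) *\<^sub>R wh"
      using Kr by (simp add: scaleR_add_right)
    moreover have "ln (real t / real K) = ln (real t) - ln (real K)"
      using t Kr by (simp add: ln_div)
    ultimately show ?thesis
      by (simp add: wc_def m1_def algebra_simps flip: scaleR_add_left)
  qed
  have small: "(\<lambda>t. norm (m1 t)) \<in> o(\<lambda>t. real t powr (\<epsilon> - 1/2))" if eps: "\<epsilon> > 0" for \<epsilon>
  proof -
    define a where "a = 1/2 + min \<epsilon> (1/2) / 2"
    have a: "1/2 < a" "a < 1" "a - 1 < \<epsilon> - 1/2" using eps by (auto simp: a_def min_def)
    obtain C T1 where CT: "\<forall>T\<ge>T1. norm (D (Suc T) - L) \<le> C * real T powr (a-1)"
      using L[OF a(1) a(2)] by blast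
    have bnd: "norm (m1 t) \<le> (2 * (norm wh + real K * \<bar>C\<bar>)) * norm (real t powr (a-1))"
      if t: "t \<ge> max 2 (Suc T1)" for t
    proof -
      define T where "T = t - 1"
      have tT: "t = Suc T" and T: "T \<ge> 1" "T \<ge> T1" using t by (auto simp: T_def)
      have p: "real T powr (-1) \<le> real T powr (a-1)"
        using T a by (intro powr_mono) auto
      have e1: "\<bar>harm T - ln (real t) - \<gamma>\<bar> \<le> real T powr (a-1)"
        using harm_err[OF T(1)] p T unfolding tT \<gamma>_def by (simp add: powr_minus divide_inverse)
      have e2: "norm (D t - L) \<le> \<bar>C\<bar> * real T powr (a-1)"
        using CT T unfolding tT by (smt (verit) mult_right_mono powr_ge_zero)
      have "norm (m1 t) \<le> \<bar>harm T - ln (real t) - \<gamma>\<bar> * norm wh + real K * norm (D t - L)"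
        unfolding m1_def T_def by (rule order_trans[OF norm_triangle_ineq]) simp
      also have "\<dots> \<le> real T powr (a-1) * norm wh + real K * (\<bar>C\<bar> * real T powr (a-1))"
        using e1 e2 by (intro add_mono mult_right_mono mult_left_mono) auto
      also have "\<dots> = (norm wh + real K * \<bar>C\<bar>) * real (t-1) powr (a-1)"
        by (simp add: T_def algebra_simps)
      also have "\<dots> \<le> (norm wh + real K * \<bar>C\<bar>) * (2 * real t powr (a-1))"
        using powr_shift_le[of t "a-1"] t a by (intro mult_left_mono) auto
      finally show ?thesis by (simp add: algebra_simps)
    qed
    have "(\<lambda>t. norm (m1 t)) \<in> O(\<lambda>t. real t powr (a-1))"
      by (intro bigoI[where c = "2 * (norm wh + real K * \<bar>C\<bar>)"])
         (use bnd in \<open>auto simp: eventually_at_top_linorder intro!: exI[of _ "max 2 (Suc T1)"]\<close>)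
    also have "(\<lambda>t. real t powr (a-1)) \<in> o(\<lambda>t. real t powr (\<epsilon> - 1/2))"
      using a by (subst powr_smallo_iff) (auto intro: filterlim_real_sequentially)
    finally show ?thesis .
  qed
  have diff: "(\<lambda>t. norm (m1 (t + 1) - m1 t)) \<in> O(\<lambda>t. 1 / real t)"
  proof -
    have bnd: "norm (m1 (t + 1) - m1 t) \<le> (norm wh + real K * M) * norm (1 / real t)" if t: "t \<ge> 1" for t
    proof -
      have tr: "real t \<ge> 1" using t by simp
      have hh: "harm t - harm (t-1) = 1 / real t"
        using t by (cases t) (auto simp: harm_Suc inverse_eq_divide)
      have DD: "D (t+1) - D t = (1/real t) *\<^sub>R d t"
        using t by (simp add: D_def)
      have "m1 (t+1) - m1 t = (1/real t - (ln (real t + 1) - ln (real t))) *\<^sub>R wh + real K *\<^sub>R ((1/real t) *\<^sub>R d t)"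
      proof -
        have "m1 (t+1) - m1 t = ((harm t - harm (t-1)) - (ln (real (t+1)) - ln (real t))) *\<^sub>R wh + real K *\<^sub>R (D (t+1) - D t)"
          unfolding m1_def by (simp add: algebra_simps)
        thus ?thesis using hh DD by (simp add: add.commute)
      qed
      moreover have l1: "0 \<le> ln (real t + 1) - ln (real t)" using tr by simp
      moreover have l2: "ln (real t + 1) - ln (real t) \<le> 1 / real t"
      proof -
        have "ln (real t + 1) - ln (real t) = ln (1 + 1/real t)"
        proof -
          have "1 + 1/real t = (real t + 1)/real t" using tr by (simp add: field_simps)
          thus ?thesis using tr by (simp add: ln_div)
        qed
        also have "\<dots> \<le> 1 / real t" by (rule ln_add_one_self_le_self) simp
        finally show ?thesis .
      qed
      moreover have "norm (d t) \<le> M" using dbound unfolding d_def v_def by blast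
      ultimately have "norm (m1 (t+1) - m1 t) \<le> \<bar>1/real t - (ln (real t + 1) - ln (real t))\<bar> * norm wh + real K * ((1/real t) * norm (d t))"
        by (metis (no_types, lifting) norm_scaleR norm_triangle_ineq abs_of_nat abs_of_nonneg
              divide_nonneg_nonneg of_nat_0_le_iff zero_le_one)
      also have "\<dots> \<le> (1/real t) * norm wh + real K * ((1/real t) * M)"
        using l1 l2 tr \<open>norm (d t) \<le> M\<close> by (intro add_mono mult_right_mono mult_left_mono) auto
      finally show ?thesis using tr by (simp add: algebra_simps)
    qed
    show ?thesis
      by (intro bigoI[where c = "norm wh + real K * M"])
         (use bnd in \<open>auto simp: eventually_at_top_linorder intro!: exI[of _ 1]\<close>)
  qed
  show ?thesis
    unfolding lemma5_concl_def
    by (intro exI[of _ wc] exI[of _ m1] conjI allI impI eq small diff) auto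
qed



lemma growthB:
  fixes x :: "nat \<Rightarrow> real^'d" and S :: "nat set" and K :: nat and bs :: "nat \<Rightarrow> nat set"
  assumes fin: "finite S"
    and wh: "wh = (\<Sum>n\<in>S. \<alpha> n *\<^sub>R x n)"
    and sc: "\<And>n. n \<in> S \<Longrightarrow> \<exists>C T0. \<forall>T\<ge>T0. \<bar>\<Sum>u\<in>{1..T}. (if n \<in> bs u then 1 else 0) - 1/real K\<bar> \<le> C * real T powr a"
  shows "\<exists>C T0. \<forall>T\<ge>T0. norm (\<Sum>u\<in>{1..T}. (\<Sum>n\<in>S \<inter> bs u. \<alpha> n *\<^sub>R x n) - (1/real K) *\<^sub>R wh) \<le> C * real T powr a"
proof -
  define Y where "Y n T = (\<Sum>u\<in>{1..T}. (if n \<in> bs u then 1 else 0) - 1/real K)" for n T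
  have ident: "(\<Sum>u\<in>{1..T}. (\<Sum>n\<in>S \<inter> bs u. \<alpha> n *\<^sub>R x n) - (1/real K) *\<^sub>R wh)
      = (\<Sum>n\<in>S. Y n T *\<^sub>R (\<alpha> n *\<^sub>R x n))" for T
  proof -
    have "(\<Sum>n\<in>S \<inter> bs u. \<alpha> n *\<^sub>R x n) - (1/real K) *\<^sub>R wh
       = (\<Sum>n\<in>S. ((if n \<in> bs u then 1 else 0) - 1/real K) *\<^sub>R (\<alpha> n *\<^sub>R x n))" for u
    proof -
      have "(\<Sum>n\<in>S \<inter> bs u. \<alpha> n *\<^sub>R x n) = (\<Sum>n\<in>S. (if n \<in> bs u then 1 else 0) *\<^sub>R (\<alpha> n *\<^sub>R x n))"
        using fin by (simp add: sum.inter_restrict) (intro sum.cong, auto)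
      moreover have "(1/real K) *\<^sub>R wh = (\<Sum>n\<in>S. (1/real K) *\<^sub>R (\<alpha> n *\<^sub>R x n))"
        unfolding wh by (rule scaleR_sum_right)
      ultimately show ?thesis
        by (simp only: scaleR_diff_left sum_subtractf)
    qed
    hence "(\<Sum>u\<in>{1..T}. (\<Sum>n\<in>S \<inter> bs u. \<alpha> n *\<^sub>R x n) - (1/real K) *\<^sub>R wh)
       = (\<Sum>u\<in>{1..T}. \<Sum>n\<in>S. ((if n \<in> bs u then 1 else 0) - 1/real K) *\<^sub>R (\<alpha> n *\<^sub>R x n))"
      by simp
    also have "\<dots> = (\<Sum>n\<in>S. \<Sum>u\<in>{1..T}. ((if n \<in> bs u then 1 else 0) - 1/real K) *\<^sub>R (\<alpha> n *\<^sub>R x n))"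
      by (rule sum.swap)
    also have "\<dots> = (\<Sum>n\<in>S. Y n T *\<^sub>R (\<alpha> n *\<^sub>R x n))"
      unfolding Y_def by (simp only: scaleR_sum_left)
    finally show ?thesis .
  qed
  from sc have "\<forall>n\<in>S. \<exists>C T0. \<forall>T\<ge>T0. \<bar>Y n T\<bar> \<le> C * real T powr a" unfolding Y_def by blast
  then obtain Cf Tf where CT: "\<And>n T. n \<in> S \<Longrightarrow> T \<ge> Tf n \<Longrightarrow> \<bar>Y n T\<bar> \<le> Cf n * real T powr a"
    by metis
  show ?thesis
  proof (intro exI[of _ "\<Sum>n\<in>S. \<bar>Cf n\<bar> * norm (\<alpha> n *\<^sub>R x n)"] exI[of _ "\<Sum>n\<in>S. Tf n"] allI impI)
    fix T assume T: "T \<ge> (\<Sum>n\<in>S. Tf n)"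
    have "norm (\<Sum>n\<in>S. Y n T *\<^sub>R (\<alpha> n *\<^sub>R x n)) \<le> (\<Sum>n\<in>S. \<bar>Y n T\<bar> * norm (\<alpha> n *\<^sub>R x n))"
      by (rule order_trans[OF norm_sum]) (simp add: abs_mult mult.assoc)
    also have "\<dots> \<le> (\<Sum>n\<in>S. (\<bar>Cf n\<bar> * real T powr a) * norm (\<alpha> n *\<^sub>R x n))"
    proof (intro sum_mono mult_right_mono)
      fix n assume n: "n \<in> S"
      have "Tf n \<le> T" using T member_le_sum[of n S Tf] fin n by simp
      hence "\<bar>Y n T\<bar> \<le> Cf n * real T powr a" using CT n by blast
      also have "\<dots> \<le> \<bar>Cf n\<bar> * real T powr a" by (intro mult_right_mono) auto
      finally show "\<bar>Y n T\<bar> \<le> \<bar>Cf n\<bar> * real T powr a" .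
    qed simp
    also have "\<dots> = (\<Sum>n\<in>S. \<bar>Cf n\<bar> * norm (\<alpha> n *\<^sub>R x n)) * real T powr a"
      by (simp only: sum_distrib_right) (simp add: algebra_simps)
    finally show "norm (\<Sum>u\<in>{1..T}. (\<Sum>n\<in>S \<inter> bs u. \<alpha> n *\<^sub>R x n) - (1/real K) *\<^sub>R wh)
        \<le> (\<Sum>n\<in>S. \<bar>Cf n\<bar> * norm (\<alpha> n *\<^sub>R x n)) * real T powr a"
      unfolding ident .
  qed
qed

lemma dboundB:
  fixes x :: "nat \<Rightarrow> real^'d" and S :: "nat set" and K :: nat and bs :: "nat \<Rightarrow> nat set"
  assumes fin: "finite S"
  shows "norm ((\<Sum>n\<in>S \<inter> bs u. \<alpha> n *\<^sub>R x n) - (1/real K) *\<^sub>R wh) \<le> (\<Sum>n\<in>S. norm (\<alpha> n *\<^sub>R x n)) + norm wh"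
proof -
  have "norm (\<Sum>n\<in>S \<inter> bs u. \<alpha> n *\<^sub>R x n) \<le> (\<Sum>n\<in>S \<inter> bs u. norm (\<alpha> n *\<^sub>R x n))"
    by (rule norm_sum)
  also have "\<dots> \<le> (\<Sum>n\<in>S. norm (\<alpha> n *\<^sub>R x n))"
    using fin by (intro sum_mono2) auto
  finally have 1: "norm (\<Sum>n\<in>S \<inter> bs u. \<alpha> n *\<^sub>R x n) \<le> (\<Sum>n\<in>S. norm (\<alpha> n *\<^sub>R x n))" .
  have 2: "norm ((1/real K) *\<^sub>R wh) \<le> norm wh"
  proof (cases "K = 0")
    case False then show ?thesis by (simp add: divide_le_eq_1 mult_le_cancel_right1 field_simps)
  qed simp
  show ?thesis using 1 2 norm_triangle_ineq4 by (smt (verit))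
qed


lemma sum_lessThan_plus:
  fixes g :: "nat \<Rightarrow> 'a::comm_monoid_add"
  shows "(\<Sum>u<m + r. g u) = (\<Sum>u<m. g u) + (\<Sum>i<r. g (m + i))"
  by (induction r) (simp_all add: add.assoc)

lemma epoch_count:
  fixes A :: "nat \<Rightarrow> nat set" and K N B :: nat
  assumes sub: "\<And>k. k < K \<Longrightarrow> A k \<subseteq> {1..N}" and card: "\<And>k. k < K \<Longrightarrow> card (A k) = B"
    and cover: "(\<Union>k<K. A k) = {1..N}" and KB: "K * B = N" and m: "m \<in> {1..N}"
  shows "(\<Sum>k<K. (if m \<in> A k then 1 else 0 :: nat)) = 1"
proof -
  define c where "c m = (\<Sum>k<K. (if m \<in> A k then 1 else 0 :: nat))" for m
  have "(\<Sum>m\<in>{1..N}. c m) = (\<Sum>k<K. \<Sum>m\<in>{1..N}. (if m \<in> A k then 1 else 0 :: nat))"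
    unfolding c_def by (rule sum.swap)
  also have "\<dots> = (\<Sum>k<K. card ({1..N} \<inter> A k))"
  proof (intro sum.cong refl)
    fix k
    have "(\<Sum>m\<in>{1..N}. (if m \<in> A k then 1 else 0 :: nat)) = (\<Sum>m\<in>{1..N} \<inter> A k. 1)"
      by (rule sum.inter_restrict[symmetric]) simp
    thus "(\<Sum>m\<in>{1..N}. (if m \<in> A k then 1 else 0 :: nat)) = card ({1..N} \<inter> A k)" by simp
  qed
  also have "\<dots> = (\<Sum>k<K. B)"
  proof (intro sum.cong refl)
    fix k assume "k \<in> {..<K}"
    hence "{1..N} \<inter> A k = A k" using sub by blast
    thus "card ({1..N} \<inter> A k) = B" using card \<open>k \<in> {..<K}\<close> by simp
  qed
  also have "\<dots> = N" using KB by simp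
  finally have tot: "(\<Sum>m\<in>{1..N}. c m) = N" .
  have ge1: "c m' \<ge> 1" if "m' \<in> {1..N}" for m'
  proof -
    have "m' \<in> (\<Union>k<K. A k)" using cover that by simp
    then obtain k where k: "k < K" "m' \<in> A k" by (auto simp only: UN_iff lessThan_iff)
    have "1 = (if m' \<in> A k then 1 else 0 :: nat)" using k by simp
    also have "\<dots> \<le> c m'" unfolding c_def using k
      by (intro member_le_sum[of k "{..<K}" "\<lambda>k. (if m' \<in> A k then 1 else 0 :: nat)"]) auto
    finally show ?thesis .
  qed
  have "(\<Sum>m\<in>{1..N}. c m) = (\<Sum>m\<in>{1..N}. (c m - 1) + 1)"
    using ge1 by (intro sum.cong refl) (metis le_add_diff_inverse2)
  also have "\<dots> = (\<Sum>m\<in>{1..N}. (c m - 1)) + (\<Sum>m\<in>{1..N}. 1)"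
    by (rule sum.distrib)
  also have "(\<Sum>m\<in>{1..N}. (1::nat)) = N" by simp
  finally have "(\<Sum>m\<in>{1..N}. (c m - 1)) = 0" using tot by linarith
  hence "\<forall>m'\<in>{1..N}. c m' - 1 = 0" by (simp only: sum_eq_0_iff finite_atLeastAtMost)
  hence "c m - 1 = 0" using m by blast
  thus ?thesis using ge1[OF m] unfolding c_def by simp
qed

lemma det_scalar:
  assumes wr: "without_replacement N B bs" and B: "0 < B" "B dvd N" and n: "n \<in> {1..N}" and a: "a \<ge> 0"
  shows "\<exists>C T0. \<forall>T\<ge>T0. \<bar>\<Sum>u\<in>{1..T}. (if n \<in> bs u then 1 else 0) - 1/real (N div B)\<bar> \<le> C * real T powr a"
proof -
  define K where "K = N div B"
  have KB: "K * B = N" using B by (simp add: K_def)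
  have Kpos: "K > 0" using KB n by (cases K) auto
  define g where "g u = (if n \<in> bs u then 1 else 0) - 1/real K" for u
  have gb: "\<bar>g u\<bar> \<le> 1" for u using Kpos by (simp add: g_def)
  have ep: "(\<Sum>k<K. g (K * e + k)) = 0" for e
  proof -
    have c: "(\<Sum>k<K. (if n \<in> bs (K * e + k) then 1 else 0 :: nat)) = 1"
    proof (rule epoch_count[where A = "\<lambda>k. bs (K * e + k)" and N = N and B = B])
      have w1: "\<forall>u. bs u \<subseteq> {1..N} \<and> card (bs u) = B"
        using wr unfolding without_replacement_def minibatches_def by blast
      have w2: "(\<Union>k<K. bs (K * e + k)) = {1..N}"
        using wr unfolding without_replacement_def K_def by blast
      show "\<And>k. k < K \<Longrightarrow> bs (K * e + k) \<subseteq> {1..N}" using w1 by blast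
      show "\<And>k. k < K \<Longrightarrow> card (bs (K * e + k)) = B" using w1 by blast
      show "(\<Union>k<K. bs (K * e + k)) = {1..N}" by (rule w2)
    qed (use KB n in auto)
    have "(\<Sum>k<K. (if n \<in> bs (K * e + k) then 1 else 0 :: real)) = 1"
      using arg_cong[OF c, of real] by (simp add: of_nat_sum if_distrib cong: if_cong)
    thus ?thesis using Kpos by (simp add: g_def sum_subtractf)
  qed
  have full: "(\<Sum>u<K * q. g u) = 0" for q
  proof (induction q)
    case (Suc q)
    have "(\<Sum>u<K * Suc q. g u) = (\<Sum>u<K * q + K. g u)" by (simp add: algebra_simps)
    also have "\<dots> = 0" using Suc ep[of q] by (simp only: sum_lessThan_plus)
    finally show ?case .
  qed simp
  have part: "\<bar>\<Sum>u<m. g u\<bar> \<le> real K" for m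
  proof -
    have "(\<Sum>u<m. g u) = (\<Sum>u<K * (m div K) + m mod K. g u)" by simp
    also have "\<dots> = (\<Sum>u<K * (m div K). g u) + (\<Sum>i<m mod K. g (K * (m div K) + i))"
      by (rule sum_lessThan_plus)
    also have "\<dots> = (\<Sum>i<m mod K. g (K * (m div K) + i))" using full by simp
    also have "\<bar>\<dots>\<bar> \<le> (\<Sum>i<m mod K. 1)"
      by (rule order_trans[OF sum_abs]) (intro sum_mono gb)
    also have "\<dots> \<le> real K" using Kpos by simp
    finally show ?thesis .
  qed
  show ?thesis
  proof (intro exI[of _ "real K + 1"] exI[of _ 1] allI impI)
    fix T :: nat assume T: "T \<ge> 1"
    have "(\<Sum>u<Suc T. g u) = g 0 + (\<Sum>u\<in>{1..T}. g u)"
      by (simp add: lessThan_Suc_atMost atLeast0AtMost[symmetric] sum.atLeast_Suc_atMost)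
    hence "\<bar>\<Sum>u\<in>{1..T}. g u\<bar> \<le> real K + 1" using part[of "Suc T"] gb[of 0] by linarith
    also have "\<dots> \<le> (real K + 1) * real T powr a"
    proof -
      have "1 \<le> real T powr a" using T a by (intro ge_one_powr_ge_zero) auto
      thus ?thesis by (simp add: mult_le_cancel_left1)
    qed
    finally show "\<bar>\<Sum>u\<in>{1..T}. (if n \<in> bs u then 1 else 0) - 1/real (N div B)\<bar> \<le> (real K + 1) * real T powr a"
      by (simp add: g_def K_def)
  qed
qed



lemma card_mb_with:
  assumes n: "n \<in> {1..N}" and B: "B \<ge> 1"
  shows "card {A. A \<subseteq> {1..N} \<and> card A = B \<and> n \<in> A} = (N - 1) choose (B - 1)"
proof -
  define F where "F = {A'. A' \<subseteq> {1..N} - {n} \<and> card A' = B - 1}"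
  have img: "{A. A \<subseteq> {1..N} \<and> card A = B \<and> n \<in> A} = insert n ` F"
  proof (intro equalityI subsetI)
    fix A assume "A \<in> {A. A \<subseteq> {1..N} \<and> card A = B \<and> n \<in> A}"
    hence A: "A \<subseteq> {1..N}" "card A = B" "n \<in> A" by auto
    have fA: "finite A" using A(1) finite_subset by blast
    have "A - {n} \<in> F" unfolding F_def using A fA by auto
    moreover have "A = insert n (A - {n})" using A by auto
    ultimately show "A \<in> insert n ` F" by blast
  next
    fix A assume "A \<in> insert n ` F"
    then obtain A' where A': "A' \<subseteq> {1..N} - {n}" "card A' = B - 1" "A = insert n A'"
      unfolding F_def by blast
    have fA: "finite A'" using A'(1) finite_subset by blast
    have "n \<notin> A'" using A' by auto
    hence "card A = Suc (B - 1)" using A' fA by simp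
    thus "A \<in> {A. A \<subseteq> {1..N} \<and> card A = B \<and> n \<in> A}" using A' n B by auto
  qed
  have inj: "inj_on (insert n) F"
    unfolding inj_on_def F_def by (auto simp: insert_ident)
  have "card F = card ({1..N} - {n}) choose (B - 1)"
    unfolding F_def by (rule n_subsets) simp
  also have "card ({1..N} - {n}) = N - 1" using n by simp
  finally show ?thesis using img inj card_image by metis
qed

lemma prob_mem:
  assumes n: "n \<in> {1..N}" and B: "0 < B" "B dvd N"
  shows "measure (measure_pmf (pmf_of_set (minibatches N B))) {A. n \<in> A} = real B / real N"
proof -
  have N: "N \<ge> 1" using n by simp
  have BN: "B \<le> N" using B N by (simp add: dvd_imp_le)
  have ne: "minibatches N B \<noteq> {}"
  proof -
    have "card {A. A \<subseteq> {1..N} \<and> card A = B} = N choose B" by (subst n_subsets) simp_all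
    moreover have "N choose B > 0" using BN by simp
    ultimately show ?thesis unfolding minibatches_def by (metis card.empty less_irrefl)
  qed
  have fin: "finite (minibatches N B)"
    unfolding minibatches_def by (rule finite_subset[of _ "Pow {1..N}"]) auto
  have c1: "card (minibatches N B) = N choose B"
    unfolding minibatches_def by (subst n_subsets) simp_all
  have c2: "card (minibatches N B \<inter> {A. n \<in> A}) = (N - 1) choose (B - 1)"
  proof -
    have "minibatches N B \<inter> {A. n \<in> A} = {A. A \<subseteq> {1..N} \<and> card A = B \<and> n \<in> A}"
      unfolding minibatches_def by auto
    thus ?thesis using card_mb_with[OF n, of B] B by simp
  qed
  have key: "real B * real (N choose B) = real N * real ((N - 1) choose (B - 1))"
    using times_binomial_minus1_eq[of B N] B by (simp flip: of_nat_mult)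
  have pos: "real (N choose B) > 0" using BN by simp
  have "measure (measure_pmf (pmf_of_set (minibatches N B))) {A. n \<in> A}
      = real ((N - 1) choose (B - 1)) / real (N choose B)"
    using measure_pmf_of_set[OF ne fin] c1 c2 by simp
  also have "\<dots> = real B / real N"
    using key pos N by (simp add: field_simps)
  finally show ?thesis .
qed

lemma exp_bound:
  fixes x :: real and m :: nat
  assumes m: "m \<ge> 1" and x: "x \<ge> 1"
  shows "exp (-2 * x powr (2 / real m)) \<le> (real m / 2) ^ m / x ^ 2"
proof -
  define y where "y = 2 * x powr (2 / real m) / real m"
  have y: "y > 0" using m x by (simp add: y_def)
  have "y \<le> exp y" using exp_ge_add_one_self[of y] by linarith
  hence "y ^ m \<le> exp y ^ m" using y by (intro power_mono) auto
  also have "exp y ^ m = exp (real m * y)" by (simp add: exp_of_nat_mult)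
  also have "real m * y = 2 * x powr (2 / real m)" using m by (simp add: y_def)
  finally have e: "y ^ m \<le> exp (2 * x powr (2 / real m))" .
  have "y ^ m = (2 / real m) ^ m * (x powr (2 / real m)) ^ m"
    by (simp add: y_def power_mult_distrib power_divide)
  also have "(x powr (2 / real m)) ^ m = x powr (2 / real m * real m)"
    using x by (simp add: powr_realpow[symmetric] powr_powr)
  also have "2 / real m * real m = 2" using m by simp
  also have "x powr 2 = x ^ 2" using x by simp
  finally have yy: "y ^ m = (2 / real m) ^ m * x ^ 2" .
  have pos: "(2 / real m) ^ m * x ^ 2 > 0" using m x by simp
  have "exp (-2 * x powr (2 / real m)) = 1 / exp (2 * x powr (2 / real m))"
    by (simp add: exp_minus inverse_eq_divide)
  also have "\<dots> \<le> 1 / ((2 / real m) ^ m * x ^ 2)"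
    using e yy pos by (intro divide_left_mono) auto
  also have "\<dots> = (real m / 2) ^ m / x ^ 2"
    using m by (simp add: power_divide field_simps)
  finally show ?thesis .
qed

lemma rand_j:
  assumes rs: "random_sampling M N B batch" and B: "0 < B" "B dvd N" and n: "n \<in> {1..N}"
  shows "AE \<omega> in M. eventually (\<lambda>T. \<bar>\<Sum>u\<in>{1..T}. (if n \<in> batch u \<omega> then 1 else 0) - 1/real (N div B)\<bar>
            < real T powr (1/2 + 1/real (Suc j))) sequentially"
proof -
  have ps: "prob_space M" and bm: "\<And>u. batch u \<in> measurable M (count_space UNIV)"
    and ind: "prob_space.indep_vars M (\<lambda>_. count_space UNIV) batch UNIV"
    and dist: "\<And>u. distr M (count_space UNIV) (batch u) = measure_pmf (pmf_of_set (minibatches N B))"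
    using rs unfolding random_sampling_def by auto
  interpret prob_space M by (rule ps)
  define K where "K = N div B"
  have KB: "K * B = N" using B by (simp add: K_def)
  have Kpos: "K > 0" using KB n by (cases K) auto
  have invK: "1 / real K = real B / real N"
  proof -
    have "real N = real K * real B" using KB by (simp flip: of_nat_mult)
    thus ?thesis using Kpos B by (simp add: field_simps)
  qed
  define g where "g A = (if n \<in> A then 1 else 0) - 1 / real K" for A :: "nat set"
  define X where "X u \<omega> = g (batch u \<omega>)" for u \<omega>
  have Xm[measurable]: "X u \<in> borel_measurable M" for u
  proof -
    have "g \<in> count_space UNIV \<rightarrow>\<^sub>M borel" by simp
    hence "g \<circ> batch u \<in> borel_measurable M" by (rule measurable_comp[OF bm])
    thus ?thesis unfolding X_def comp_def .
  qed
  have indX: "indep_vars (\<lambda>_. borel) X UNIV"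
    unfolding X_def by (rule indep_vars_compose2[OF ind]) simp
  have EX: "expectation (X u) = 0" for u
  proof -
    have "expectation (X u) = integral\<^sup>L (distr M (count_space UNIV) (batch u)) g"
      unfolding X_def by (rule integral_distr[symmetric]) (simp_all add: bm)
    also have "\<dots> = integral\<^sup>L (measure_pmf (pmf_of_set (minibatches N B))) g" by (simp add: dist)
    also have "\<dots> = integral\<^sup>L (measure_pmf (pmf_of_set (minibatches N B))) (\<lambda>A. indicator {A. n \<in> A} A - 1 / real K)"
      unfolding g_def by (intro Bochner_Integration.integral_cong) (auto simp: indicator_def)
    also have "\<dots> = measure (measure_pmf (pmf_of_set (minibatches N B))) {A. n \<in> A} - 1 / real K"
      by (subst Bochner_Integration.integral_diff) (auto simp: less_top[symmetric])
    also have "\<dots> = 0" using prob_mem[OF n B] invK by simp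
    finally show ?thesis .
  qed
  define m where "m = Suc j"
  define b where "b = 1/2 + 1 / real m"
  define A where "A T = {\<omega>\<in>space M. real T powr b \<le> \<bar>\<Sum>u\<in>{1..T}. X u \<omega>\<bar>}" for T
  have Am[measurable]: "A T \<in> events" for T unfolding A_def by measurable
  have hoeff: "prob (A T) \<le> 2 * ((real m / 2) ^ m / real T ^ 2)" if T: "T \<ge> 1" for T
  proof -
    interpret H: Hoeffding_ineq M "{1..T}" X "\<lambda>_. -1/real K" "\<lambda>_. 1 - 1/real K" "\<Sum>i\<in>{1..T}. expectation (X i)"
    proof unfold_locales
      show "indep_vars (\<lambda>_. borel) X {1..T}" by (rule indep_vars_subset[OF indX]) simp
      fix i show "AE x in M. X i x \<in> {-1/real K..1 - 1/real K}"
        using Kpos by (intro AE_I2) (auto simp: X_def g_def)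
    qed simp_all
    have s1: "(\<Sum>i\<in>{1..T}. (1 - 1/real K - (-1/real K))\<^sup>2) = real T" by simp
    have "prob {x\<in>space M. real T powr b \<le> \<bar>(\<Sum>i\<in>{1..T}. X i x) - (\<Sum>i\<in>{1..T}. expectation (X i))\<bar>}
        \<le> 2 * exp (-2 * (real T powr b)\<^sup>2 / (\<Sum>i\<in>{1..T}. (1 - 1/real K - (-1/real K))\<^sup>2))"
      by (rule H.Hoeffding_ineq_abs_ge) (use T in \<open>simp_all add: s1\<close>)
    moreover have "{x\<in>space M. real T powr b \<le> \<bar>(\<Sum>i\<in>{1..T}. X i x) - (\<Sum>i\<in>{1..T}. expectation (X i))\<bar>} = A T"
      by (simp add: EX A_def)
    moreover have "-2 * (real T powr b)\<^sup>2 / (\<Sum>i\<in>{1..T}. (1 - 1/real K - (-1/real K))\<^sup>2) = -2 * real T powr (2 / real m)"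
    proof -
      have "(real T powr b)\<^sup>2 = real T powr b * real T powr b" by (rule power2_eq_square)
      also have "\<dots> = real T powr (b + b)" by (rule powr_add[symmetric])
      also have "b + b = 2 * b" by simp
      also have "2 * b = 1 + 2 / real m" by (simp add: b_def)
      also have "real T powr (1 + 2 / real m) = real T * real T powr (2 / real m)"
        using T by (simp add: powr_add)
      finally show ?thesis unfolding s1 using T by simp
    qed
    moreover have "exp (-2 * real T powr (2 / real m)) \<le> (real m / 2) ^ m / real T ^ 2"
      by (rule exp_bound) (use T in \<open>auto simp: m_def\<close>)
    ultimately show ?thesis by simp
  qed
  have summ: "summable (\<lambda>T. measure M (A T))"
  proof (rule summable_comparison_test_ev)
    show "eventually (\<lambda>T. norm (measure M (A T)) \<le> 2 * ((real m / 2) ^ m / real T ^ 2)) sequentially"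
      unfolding eventually_at_top_linorder
    proof (intro exI[of _ 1] allI impI)
      fix T :: nat assume "T \<ge> 1"
      thus "norm (measure M (A T)) \<le> 2 * ((real m / 2) ^ m / real T ^ 2)"
        using hoeff[of T] by simp
    qed
    have "summable (\<lambda>T. inverse (real T ^ 2))" by (rule inverse_power_summable) simp
    hence "summable (\<lambda>T. (2 * (real m / 2) ^ m) * inverse (real T ^ 2))" by (rule summable_mult)
    thus "summable (\<lambda>T. 2 * ((real m / 2) ^ m / real T ^ 2))"
      by (simp only: divide_inverse mult.assoc)
  qed
  have "AE \<omega> in M. eventually (\<lambda>T. \<omega> \<in> space M - A T) sequentially"
    by (rule borel_cantelli_AE1) (simp_all add: summ less_top[symmetric])
  thus ?thesis
  proof (rule AE_mp[OF _ AE_I2[OF impI]])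
    fix \<omega> assume \<omega>: "\<omega> \<in> space M" and ev: "eventually (\<lambda>T. \<omega> \<in> space M - A T) sequentially"
    show "eventually (\<lambda>T. \<bar>\<Sum>u\<in>{1..T}. (if n \<in> batch u \<omega> then 1 else 0) - 1/real (N div B)\<bar>
            < real T powr (1/2 + 1/real (Suc j))) sequentially"
      using ev by eventually_elim (use \<omega> in \<open>auto simp: A_def X_def g_def K_def b_def m_def\<close>)
  qed
qed



lemma rand_scalar:
  assumes rs: "random_sampling M N B batch" and B: "0 < B" "B dvd N" and n: "n \<in> {1..N}"
  shows "AE \<omega> in M. \<forall>a>1/2. \<exists>C T0. \<forall>T\<ge>T0.
           \<bar>\<Sum>u\<in>{1..T}. (if n \<in> batch u \<omega> then 1 else 0) - 1/real (N div B)\<bar> \<le> C * real T powr a"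
proof -
  have "AE \<omega> in M. \<forall>j. eventually (\<lambda>T. \<bar>\<Sum>u\<in>{1..T}. (if n \<in> batch u \<omega> then 1 else 0) - 1/real (N div B)\<bar>
            < real T powr (1/2 + 1/real (Suc j))) sequentially"
    using rand_j[OF rs B n] by (simp add: AE_all_countable)
  thus ?thesis
  proof (rule AE_mp[OF _ AE_I2[OF impI]])
    fix \<omega> assume "\<omega> \<in> space M" and H: "\<forall>j. eventually (\<lambda>T. \<bar>\<Sum>u\<in>{1..T}. (if n \<in> batch u \<omega> then 1 else 0) - 1/real (N div B)\<bar>
            < real T powr (1/2 + 1/real (Suc j))) sequentially"
    show "\<forall>a>1/2. \<exists>C T0. \<forall>T\<ge>T0.
           \<bar>\<Sum>u\<in>{1..T}. (if n \<in> batch u \<omega> then 1 else 0) - 1/real (N div B)\<bar> \<le> C * real T powr a"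
    proof (intro allI impI)
      fix a :: real assume a: "a > 1/2"
      obtain j where j: "inverse (real (Suc j)) < a - 1/2"
        using reals_Archimedean[of "a - 1/2"] a by auto
      obtain T0 where T0: "\<forall>T\<ge>T0. \<bar>\<Sum>u\<in>{1..T}. (if n \<in> batch u \<omega> then 1 else 0) - 1/real (N div B)\<bar>
            < real T powr (1/2 + 1/real (Suc j))"
        using H[rule_format, of j] unfolding eventually_at_top_linorder by blast
      have "\<forall>T\<ge>max T0 1. \<bar>\<Sum>u\<in>{1..T}. (if n \<in> batch u \<omega> then 1 else 0) - 1/real (N div B)\<bar> \<le> 1 * real T powr a"
      proof (intro allI impI)
        fix T :: nat assume T: "max T0 1 \<le> T"
        have "real T powr (1/2 + 1/real (Suc j)) \<le> real T powr a"
          using T j by (intro powr_mono) (auto simp: inverse_eq_divide)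
        moreover have "\<bar>\<Sum>u\<in>{1..T}. (if n \<in> batch u \<omega> then 1 else 0) - 1/real (N div B)\<bar>
            < real T powr (1/2 + 1/real (Suc j))" using T0 T by simp
        ultimately show "\<bar>\<Sum>u\<in>{1..T}. (if n \<in> batch u \<omega> then 1 else 0) - 1/real (N div B)\<bar> \<le> 1 * real T powr a"
          by simp
      qed
      thus "\<exists>C T0. \<forall>T\<ge>T0.
           \<bar>\<Sum>u\<in>{1..T}. (if n \<in> batch u \<omega> then 1 else 0) - 1/real (N div B)\<bar> \<le> C * real T powr a"
        by blast
    qed
  qed
qed

theorem lemma5:
  fixes N B :: nat and x :: "nat \<Rightarrow> real^'d" and wh :: "real^'d" and \<alpha> :: "nat \<Rightarrow> real"
  assumes "0 < N"
    and sep: "strictly_linearly_separable N x"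
    and wh: "is_max_margin N x wh"
    and alpha_nonneg: "\<forall>n\<in>support_set N x wh. \<alpha> n \<ge> 0"
    and dual: "wh = (\<Sum>n\<in>support_set N x wh. \<alpha> n *\<^sub>R x n)"
    and "0 < B" and "B dvd N"
  shows "(\<forall>bs. without_replacement N B bs \<longrightarrow>
            lemma5_concl (N div B) x wh (support_set N x wh) \<alpha> bs) \<and>
         (\<forall>(M::'w measure) batch. random_sampling M N B batch \<longrightarrow>
            (AE \<omega> in M. lemma5_concl (N div B) x wh (support_set N x wh) \<alpha> (\<lambda>u. batch u \<omega>)))"
proof -
  define S where "S = support_set N x wh"
  have Ssub: "S \<subseteq> {1..N}" unfolding S_def support_set_def by auto
  have finS: "finite S" using Ssub finite_subset by blast
  have Kpos: "N div B > 0" using \<open>0 < N\<close> \<open>0 < B\<close> \<open>B dvd N\<close>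
    by (metis dvd_div_eq_0_iff neq0_conv)
  have dual': "wh = (\<Sum>n\<in>S. \<alpha> n *\<^sub>R x n)" using dual by (simp add: S_def)
  have part1: "lemma5_concl (N div B) x wh S \<alpha> bs" if wr: "without_replacement N B bs" for bs
  proof (rule conclA[OF Kpos])
    show "\<And>u. norm ((\<Sum>n\<in>S \<inter> bs u. \<alpha> n *\<^sub>R x n) - (1/real (N div B)) *\<^sub>R wh) \<le> (\<Sum>n\<in>S. norm (\<alpha> n *\<^sub>R x n)) + norm wh"
      by (rule dboundB[OF finS])
    fix a :: real assume a: "a > 1/2"
    show "\<exists>C T0. \<forall>T\<ge>T0. norm (\<Sum>u\<in>{1..T}. (\<Sum>n\<in>S \<inter> bs u. \<alpha> n *\<^sub>R x n) - (1/real (N div B)) *\<^sub>R wh) \<le> C * real T powr a"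
    proof (rule growthB[OF finS dual'])
      fix n assume "n \<in> S"
      hence "n \<in> {1..N}" using Ssub by blast
      thus "\<exists>C T0. \<forall>T\<ge>T0. \<bar>\<Sum>u\<in>{1..T}. (if n \<in> bs u then 1 else 0) - 1/real (N div B)\<bar> \<le> C * real T powr a"
        using det_scalar[OF wr \<open>0 < B\<close> \<open>B dvd N\<close>, of n a] a by simp
    qed
  qed
  have part2: "AE \<omega> in M. lemma5_concl (N div B) x wh S \<alpha> (\<lambda>u. batch u \<omega>)"
    if rs: "random_sampling M N B batch" for M :: "'w measure" and batch
  proof -
    have "AE \<omega> in M. \<forall>n\<in>S. \<forall>a>1/2. \<exists>C T0. \<forall>T\<ge>T0.
           \<bar>\<Sum>u\<in>{1..T}. (if n \<in> batch u \<omega> then 1 else 0) - 1/real (N div B)\<bar> \<le> C * real T powr a"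
      using rand_scalar[OF rs \<open>0 < B\<close> \<open>B dvd N\<close>] Ssub finS by (subst AE_finite_all) auto
    thus ?thesis
    proof (rule AE_mp[OF _ AE_I2[OF impI]])
      fix \<omega> assume "\<omega> \<in> space M" and H: "\<forall>n\<in>S. \<forall>a>1/2. \<exists>C T0. \<forall>T\<ge>T0.
           \<bar>\<Sum>u\<in>{1..T}. (if n \<in> batch u \<omega> then 1 else 0) - 1/real (N div B)\<bar> \<le> C * real T powr a"
      show "lemma5_concl (N div B) x wh S \<alpha> (\<lambda>u. batch u \<omega>)"
      proof (rule conclA[OF Kpos])
        show "\<And>u. norm ((\<Sum>n\<in>S \<inter> batch u \<omega>. \<alpha> n *\<^sub>R x n) - (1/real (N div B)) *\<^sub>R wh) \<le> (\<Sum>n\<in>S. norm (\<alpha> n *\<^sub>R x n)) + norm wh"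
          by (rule dboundB[OF finS])
        fix a :: real assume a: "a > 1/2"
        show "\<exists>C T0. \<forall>T\<ge>T0. norm (\<Sum>u\<in>{1..T}. (\<Sum>n\<in>S \<inter> batch u \<omega>. \<alpha> n *\<^sub>R x n) - (1/real (N div B)) *\<^sub>R wh) \<le> C * real T powr a"
          by (rule growthB[OF finS dual']) (use H a in blast)
      qed
    qed
  qed
  show ?thesis using part1 part2 unfolding S_def by blast
qed

end
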